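(* Let $n,k,r,\delta$ be positive integers with $(r+\delta-1)\mid n$, let $d = n-k+1-\left(\lceil k/r\rceil-1\right)(\delta-1)$, and assume $\delta\le d$. Let $q$ be a prime power with $q>kn^k$. Then there exists an $[n,k,d]$ linear code over $\mathbb{F}_q$ with all-symbol locality $(r,\delta)$, i.e. an $(r,\delta)_a$ code whose minimum distance equals $n-k+1-\left(\lceil k/r\rceil-1\right)(\delta-1)$.
   Context: Coordinate $i$ of a linear code $\mathcal{C}$ of length $n$ has locality $(r,\delta)$ if there is $S_i\subseteq[n]$ with $i\in S_i$, $|S_i|\le r+\delta-1$, such that the punctured code $\mathcal{C}|_{S_i}$ (delete coordinates outside $S_i$) has minimum distance at least $\delta$. A code has all-symbol locality $(r,\delta)$ (is an $(r,\delta)_a$ code) if every one of its $n$ coordinates has locality $(r,\delta)$. *)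

theory Defs
  imports "HOL-Analysis.Analysis" "HOL-Library.Function_Algebras"
begin

text \<open>Vectors of length n over a field are modelled as functions nat => 'a that vanish
  outside the coordinate set {..<n}.  Scalar multiplication is pointwise.\<close>

definition vscale :: "'a::field \<Rightarrow> (nat \<Rightarrow> 'a) \<Rightarrow> (nat \<Rightarrow> 'a)" where
  "vscale c v = (\<lambda>i. c * v i)"

definition ambient :: "nat \<Rightarrow> (nat \<Rightarrow> 'a::zero) set" where
  "ambient n = {v. \<forall>i. n \<le> i \<longrightarrow> v i = 0}"

definition linear_code :: "nat \<Rightarrow> nat \<Rightarrow> (nat \<Rightarrow> 'a::field) set \<Rightarrow> bool" where
  "linear_code n k C \<longleftrightarrow> C \<subseteq> ambient n \<and> module.subspace vscale C
      \<and> vector_space.dim vscale C = k"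

definition hweight :: "nat \<Rightarrow> (nat \<Rightarrow> 'a::zero) \<Rightarrow> nat" where
  "hweight n v = card {i. i < n \<and> v i \<noteq> 0}"

definition min_dist :: "nat \<Rightarrow> (nat \<Rightarrow> 'a::zero) set \<Rightarrow> nat" where
  "min_dist n C = Min (hweight n ` (C - {0}))"

text \<open>Puncturing: keep coordinates in S, delete (zero out) the others.\<close>
definition puncture :: "nat set \<Rightarrow> (nat \<Rightarrow> 'a::zero) set \<Rightarrow> (nat \<Rightarrow> 'a) set" where
  "puncture S C = (\<lambda>v i. if i \<in> S then v i else 0) ` C"

definition min_dist_ge :: "nat \<Rightarrow> (nat \<Rightarrow> 'a::zero) set \<Rightarrow> nat \<Rightarrow> bool" where
  "min_dist_ge n C \<delta> \<longleftrightarrow> (\<forall>c\<in>C. c \<noteq> 0 \<longrightarrow> \<delta> \<le> hweight n c)"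

definition has_locality :: "nat \<Rightarrow> (nat \<Rightarrow> 'a::zero) set \<Rightarrow> nat \<Rightarrow> nat \<Rightarrow> nat \<Rightarrow> bool" where
  "has_locality n C r \<delta> i \<longleftrightarrow>
     (\<exists>S. S \<subseteq> {..<n} \<and> i \<in> S \<and> card S \<le> r + \<delta> - 1 \<and> min_dist_ge n (puncture S C) \<delta>)"

definition all_symbol_locality :: "nat \<Rightarrow> (nat \<Rightarrow> 'a::zero) set \<Rightarrow> nat \<Rightarrow> nat \<Rightarrow> bool" where
  "all_symbol_locality n C r \<delta> \<longleftrightarrow> (\<forall>i<n. has_locality n C r \<delta> i)"

end

theory Submission
  imports Defs
begin


lemma vs_vscale: "vector_space (vscale :: 'a::field \<Rightarrow> _)"
  by unfold_locales (auto simp: vscale_def fun_eq_iff algebra_simps)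

interpretation VS: vector_space "vscale :: 'a::field \<Rightarrow> (nat \<Rightarrow> 'a) \<Rightarrow> _"
  by (rule vs_vscale)

lemma sum_fun_apply: "(\<Sum>x\<in>A. f x) l = (\<Sum>x\<in>A. f x l)" for f :: "'b \<Rightarrow> nat \<Rightarrow> 'a::comm_monoid_add"
  by (induction A rule: infinite_finite_induct) auto

definition dotp :: "nat \<Rightarrow> (nat \<Rightarrow> 'a::field) \<Rightarrow> (nat \<Rightarrow> 'a) \<Rightarrow> 'a" where
  "dotp k u x = (\<Sum>i<k. u i * x i)"

definition unitv :: "nat \<Rightarrow> nat \<Rightarrow> 'a::field" where
  "unitv i = (\<lambda>j. if j = i then 1 else 0)"

lemma dotp_add2: "dotp k u (x + y) = dotp k u x + dotp k u y"
  by (simp add: dotp_def algebra_simps sum.distrib)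
lemma dotp_scale2: "dotp k u (vscale c x) = c * dotp k u x"
  by (simp add: dotp_def vscale_def sum_distrib_left algebra_simps)
lemma dotp_add1: "dotp k (u + v) x = dotp k u x + dotp k v x"
  by (simp add: dotp_def algebra_simps sum.distrib)
lemma dotp_diff1: "dotp k (u - v) x = dotp k u x - dotp k v x"
  by (simp add: dotp_def algebra_simps sum_subtractf)
lemma dotp_scale1: "dotp k (vscale c u) x = c * dotp k u x"
  by (simp add: dotp_def vscale_def sum_distrib_left algebra_simps)
lemma dotp_zero1[simp]: "dotp k 0 x = 0"
  by (simp add: dotp_def)

lemma dotp_span:
  assumes "\<forall>x\<in>S. dotp k u x = 0" "x \<in> VS.span S"
  shows "dotp k u x = 0"
  using assms(2)
proof (induction rule: VS.span_induct_alt)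
  case base then show ?case by (simp add: dotp_def)
next
  case (step c x y) then show ?case using assms(1) by (simp only: dotp_add2 dotp_scale2) simp
qed

lemma sum_delta_mult: "(\<Sum>j\<in>A. f j * (if j = i then 1 else 0)) = (if i \<in> A then f i else (0::'a::semiring_1))" if "finite A"
proof -
  have "(\<lambda>j. f j * (if j = i then 1 else 0)) = (\<lambda>j. if j = i then f i else 0)" by auto
  show ?thesis unfolding \<open>_ = _\<close> using that by (simp add: sum.delta')
qed

lemma sum_delta_mult': "(\<Sum>j\<in>A. f j * (if i = j then 1 else 0)) = (if i \<in> A then f i else (0::'a::semiring_1))" if "finite A"
proof -
  have "(\<lambda>j. f j * (if i = j then 1 else 0)) = (\<lambda>j. if j = i then f i else 0)" by auto
  show ?thesis unfolding \<open>_ = _\<close> using that by (simp add: sum.delta')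
qed

lemma dotp_unitv: "i < k \<Longrightarrow> dotp k u (unitv i) = u i"
  by (simp add: dotp_def unitv_def sum_delta_mult)

lemma unitv_amb: "i < k \<Longrightarrow> unitv i \<in> ambient k"
  by (simp add: ambient_def unitv_def)

lemma amb_subspace: "VS.subspace (ambient k)"
  by (auto simp: VS.subspace_def ambient_def vscale_def)

lemma amb_decomp: "u \<in> ambient k \<Longrightarrow> u = (\<Sum>i<k. vscale (u i) (unitv i))"
  by (rule ext) (auto simp: sum_fun_apply vscale_def unitv_def ambient_def sum_delta_mult')

lemma amb_span: "(ambient k :: (nat \<Rightarrow> 'a::field) set) = VS.span (unitv ` {..<k})"
proof
  show "(ambient k :: (nat \<Rightarrow> 'a::field) set) \<subseteq> VS.span (unitv ` {..<k})"
  proof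
    fix u :: "nat \<Rightarrow> 'a" assume u: "u \<in> ambient k"
    show "u \<in> VS.span (unitv ` {..<k})"
      by (subst amb_decomp[OF u]) (rule VS.span_sum, rule VS.span_scale, rule VS.span_base, auto)
  qed
  show "VS.span (unitv ` {..<k}) \<subseteq> (ambient k :: (nat \<Rightarrow> 'a::field) set)"
    by (rule VS.span_minimal) (auto simp: unitv_amb amb_subspace)
qed

lemma unitv_inj: "inj (unitv :: nat \<Rightarrow> nat \<Rightarrow> 'a::field)"
  by (auto simp: inj_def unitv_def fun_eq_iff split: if_splits)

lemma unitv_indep: "VS.independent (unitv ` {..<k} :: (nat \<Rightarrow> 'a::field) set)"
proof (rule VS.independent_if_scalars_zero)
  show "finite (unitv ` {..<k} :: (nat \<Rightarrow> 'a) set)" by simp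
  fix f :: "(nat \<Rightarrow> 'a) \<Rightarrow> 'a" and x :: "nat \<Rightarrow> 'a" assume s: "(\<Sum>x\<in>(unitv ` {..<k} :: (nat \<Rightarrow> 'a) set). vscale (f x) x) = 0"
    and x: "x \<in> unitv ` {..<k}"
  then obtain i where i: "i < k" "x = unitv i" by auto
  have "(\<Sum>j<k. vscale (f (unitv j)) (unitv j :: nat \<Rightarrow> 'a)) = 0"
    using s by (simp add: sum.reindex inj_on_def unitv_inj[THEN injD])
  hence "(\<Sum>j<k. vscale (f (unitv j)) (unitv j :: nat \<Rightarrow> 'a)) i = 0" by simp
  hence "(\<Sum>j<k. f (unitv j) * unitv j i) = 0" by (simp add: sum_fun_apply vscale_def)
  moreover have "(\<Sum>j<k. f (unitv j) * (unitv j i :: 'a)) = f (unitv i)"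
    using i by (simp add: unitv_def sum.delta' if_distrib cong: if_cong)
  ultimately show "f x = 0" using i by simp
qed

lemma card_unitv: "card (unitv ` {..<k} :: (nat \<Rightarrow> 'a::field) set) = k"
  by (simp add: card_image inj_on_def unitv_inj[THEN injD])

lemma span_full:
  assumes "finite W" "VS.independent I" "I \<subseteq> VS.span W" "card W \<le> card I"
  shows "VS.span W \<subseteq> VS.span I"
proof -
  have "W \<subseteq> VS.span I"
  proof
    fix w assume w: "w \<in> W"
    show "w \<in> VS.span I"
    proof (rule ccontr)
      assume nw: "w \<notin> VS.span I"
      have fI: "finite I" using VS.independent_span_bound[OF assms(1,2,3)] by simp
      have ind: "VS.independent (insert w I)" using VS.independent_insertI[OF nw assms(2)] .
      have "insert w I \<subseteq> VS.span W" using assms(3) w VS.span_base by blast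
      from VS.independent_span_bound[OF assms(1) ind this] have "card (insert w I) \<le> card W" by simp
      moreover have "w \<notin> I" using nw VS.span_base by blast
      hence "card (insert w I) = card I + 1" using fI by simp
      ultimately show False using assms(4) by simp
    qed
  qed
  thus ?thesis using VS.span_minimal VS.subspace_span by blast
qed

lemma amb_not_sub:
  assumes "finite S" "card S < k"
  shows "\<not> ambient k \<subseteq> VS.span (S :: (nat \<Rightarrow> 'a::field) set)"
proof
  assume "ambient k \<subseteq> VS.span S"
  hence "unitv ` {..<k} \<subseteq> VS.span S" using unitv_amb by blast
  from VS.independent_span_bound[OF assms(1) unitv_indep this] have "k \<le> card S"
    by (simp add: card_unitv)
  thus False using assms(2) by simp
qed

lemma dotp_zero_amb:
  assumes "u \<in> ambient k" "\<forall>x\<in>ambient k. dotp k u x = 0"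
  shows "u = 0"
proof (rule ext)
  fix i show "u i = 0 i"
  proof (cases "i < k")
    case True
    have "dotp k u (unitv i) = 0" using assms(2) unitv_amb[OF True] by blast
    then show ?thesis using dotp_unitv[OF True, of u] by simp
  next
    case False then show ?thesis using assms(1) by (simp add: ambient_def)
  qed
qed

lemma amb_eq_image: "(ambient k :: (nat \<Rightarrow> 'a::zero) set) = (\<lambda>f i. if i < k then f i else 0) ` (PiE {..<k} (\<lambda>_. UNIV))"
proof
  show "(ambient k :: (nat \<Rightarrow> 'a::zero) set) \<subseteq> (\<lambda>f i. if i < k then f i else 0) ` (PiE {..<k} (\<lambda>_. UNIV))"
  proof
    fix u :: "nat \<Rightarrow> 'a" assume u: "u \<in> ambient k"
    show "u \<in> (\<lambda>f i. if i < k then f i else 0) ` (PiE {..<k} (\<lambda>_. UNIV))"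
    proof (rule image_eqI[of _ _ "restrict u {..<k}"])
      show "u = (\<lambda>i. if i < k then restrict u {..<k} i else 0)"
      proof (rule ext)
        fix i show "u i = (if i < k then restrict u {..<k} i else 0)"
        proof (cases "i < k")
          case False thus ?thesis using u unfolding ambient_def by auto
        qed simp
      qed
    qed simp
  qed
next
  show "(\<lambda>f i. if i < k then f i else 0) ` (PiE {..<k} (\<lambda>_. UNIV)) \<subseteq> (ambient k :: (nat \<Rightarrow> 'a::zero) set)"
    by (rule image_subsetI) (simp add: ambient_def)
qed

lemma finite_amb: "finite (ambient k :: (nat \<Rightarrow> 'a::{finite,zero}) set)"
  unfolding amb_eq_image by (rule finite_imageI) (rule finite_PiE, auto)

lemma card_amb: "card (ambient k :: (nat \<Rightarrow> 'a::{finite,zero}) set) = CARD('a) ^ k"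
proof -
  have "inj_on (\<lambda>f i. if i < k then f i else (0::'a)) (PiE {..<k} (\<lambda>_. UNIV))"
  proof (rule inj_onI)
    fix f g :: "nat \<Rightarrow> 'a" assume f: "f \<in> PiE {..<k} (\<lambda>_. UNIV)" and g: "g \<in> PiE {..<k} (\<lambda>_. UNIV)"
      and e: "(\<lambda>i. if i < k then f i else 0) = (\<lambda>i. if i < k then g i else 0)"
    show "f = g"
    proof (rule ext)
      fix i show "f i = g i"
      proof (cases "i < k")
        case True thus ?thesis using fun_cong[OF e, of i] by simp
      next
        case False thus ?thesis using PiE_arb[OF f, of i] PiE_arb[OF g, of i] by simp
      qed
    qed
  qed
  thus ?thesis unfolding amb_eq_image by (simp add: card_image card_PiE)
qed

lemma coset_bound:
  fixes U D :: "(nat \<Rightarrow> 'a::{field,finite}) set"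
  assumes U: "VS.subspace U" and D: "VS.subspace D" and fD: "finite D" and nsub: "\<not> D \<subseteq> U"
  shows "CARD('a) * card (D \<inter> U) \<le> card D"
proof -
  obtain w where w: "w \<in> D" "w \<notin> U" using nsub by blast
  define \<phi> where "\<phi> = (\<lambda>p :: 'a \<times> (nat \<Rightarrow> 'a). vscale (fst p) w + snd p)"
  have inj: "inj_on \<phi> ((UNIV :: 'a set) \<times> (D \<inter> U))"
  proof (rule inj_onI)
    fix p p' assume p: "p \<in> (UNIV :: 'a set) \<times> (D \<inter> U)" and p': "p' \<in> (UNIV :: 'a set) \<times> (D \<inter> U)" and e: "\<phi> p = \<phi> p'"
    obtain a x where ax: "p = (a, x)" by (cases p)
    obtain b y where by': "p' = (b, y)" by (cases p')
    have x: "x \<in> U" and y: "y \<in> U" using p p' ax by' by auto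
    have e': "vscale a w + x = vscale b w + y" using e ax by' by (simp add: \<phi>_def)
    show "p = p'"
    proof (cases "a = b")
      case True thus ?thesis using e' ax by' by simp
    next
      case False
      have ei: "a * w i + x i = b * w i + y i" for i using fun_cong[OF e', of i] by (simp add: vscale_def)
      have "w = vscale (inverse (a - b)) (y - x)"
      proof (rule ext)
        fix i
        have "(a - b) * w i = y i - x i" using ei[of i] by (simp add: algebra_simps)
        hence "w i = inverse (a - b) * (y i - x i)" using False by (simp add: field_simps)
        thus "w i = vscale (inverse (a - b)) (y - x) i" by (simp add: vscale_def)
      qed
      moreover have "vscale (inverse (a - b)) (y - x) \<in> U"
        by (rule VS.subspace_scale[OF U], rule VS.subspace_diff[OF U y x])
      ultimately show ?thesis using w by simp
    qed
  qed
  have img: "\<phi> ` ((UNIV :: 'a set) \<times> (D \<inter> U)) \<subseteq> D"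
  proof (rule image_subsetI)
    fix p assume "p \<in> (UNIV :: 'a set) \<times> (D \<inter> U)"
    thus "\<phi> p \<in> D" unfolding \<phi>_def
      by (intro VS.subspace_add[OF D] VS.subspace_scale[OF D] w(1)) auto
  qed
  have "card ((UNIV :: 'a set) \<times> (D \<inter> U)) \<le> card D"
    using card_inj_on_le[OF inj img fD] .
  thus ?thesis by (simp add: card_cartesian_product)
qed

lemma avoid_subspaces:
  fixes D :: "(nat \<Rightarrow> 'a::{field,finite}) set" and \<U> :: "(nat \<Rightarrow> 'a) set set"
  assumes D: "VS.subspace D" and fD: "finite D" and fU: "finite \<U>" and cU: "card \<U> < CARD('a)"
    and U: "\<And>U. U \<in> \<U> \<Longrightarrow> VS.subspace U \<and> \<not> D \<subseteq> U"
  shows "\<exists>x\<in>D. \<forall>U\<in>\<U>. x \<notin> U"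
proof (rule ccontr)
  assume "\<not> ?thesis"
  hence cov: "D \<subseteq> (\<Union>U\<in>\<U>. D \<inter> U)" by blast
  have "CARD('a) * card D \<le> CARD('a) * card (\<Union>U\<in>\<U>. D \<inter> U)"
    using card_mono[OF _ cov] fD by simp
  also have "\<dots> \<le> CARD('a) * (\<Sum>U\<in>\<U>. card (D \<inter> U))"
    using card_UN_le[OF fU, of "\<lambda>U. D \<inter> U"] by (rule mult_le_mono2)
  also have "\<dots> = (\<Sum>U\<in>\<U>. CARD('a) * card (D \<inter> U))"
    by (simp add: sum_distrib_left)
  also have "\<dots> \<le> (\<Sum>U\<in>\<U>. card D)"
    by (rule sum_mono) (use U coset_bound[OF _ D fD] in blast)
  also have "\<dots> = card \<U> * card D" by simp
  finally have "CARD('a) * card D \<le> card \<U> * card D" .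
  moreover have "0 < card D" using fD VS.subspace_0[OF D] card_gt_0_iff by blast
  ultimately show False using cU by (meson mult_le_cancel2 not_le)
qed

lemma choose_le_bound: "N < n \<Longrightarrow> s < k \<Longrightarrow> N choose s \<le> n ^ k"
proof -
  assume a: "N < n" "s < k"
  have "N choose s \<le> N ^ s"
    by (cases "s \<le> N") (auto simp: binomial_le_pow binomial_eq_0)
  also have "\<dots> \<le> n ^ s" using a by (simp add: power_mono)
  also have "\<dots> \<le> n ^ k" using a by (intro power_increasing) auto
  finally show ?thesis .
qed

lemma count_subsets:
  assumes "N < n"
  shows "card {T. T \<subseteq> {..<N} \<and> card T < k} \<le> k * n ^ k"
proof -
  have eq: "{T. T \<subseteq> {..<N} \<and> card T < k} = (\<Union>s<k. {T. T \<subseteq> {..<N} \<and> card T = s})" by auto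
  have "card {T. T \<subseteq> {..<N} \<and> card T < k} \<le> (\<Sum>s<k. card {T. T \<subseteq> {..<N} \<and> card T = s})"
    unfolding eq by (rule card_UN_le) simp
  also have "\<dots> = (\<Sum>s<k. N choose s)"
    by (rule sum.cong) (auto simp: n_subsets)
  also have "\<dots> \<le> (\<Sum>s<k. n ^ k)"
    by (rule sum_mono) (use assms choose_le_bound in auto)
  finally show ?thesis by simp
qed

definition Fb :: "nat \<Rightarrow> nat \<Rightarrow> nat \<Rightarrow> nat set" where
  "Fb r g j = {j*g ..< j*g + r}"

definition grp_ok :: "nat \<Rightarrow> nat \<Rightarrow> nat set \<Rightarrow> bool" where
  "grp_ok r g T \<longleftrightarrow> (\<forall>j. card {i\<in>T. i div g = j} \<le> r)"

definition Inv :: "nat \<Rightarrow> nat \<Rightarrow> nat \<Rightarrow> nat \<Rightarrow> (nat \<Rightarrow> nat \<Rightarrow> 'a::field) \<Rightarrow> bool" where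
  "Inv k r g N h \<longleftrightarrow> (\<forall>i<N. h i \<in> ambient k)
     \<and> (\<forall>i<N. r \<le> i mod g \<longrightarrow> h i \<in> VS.span (h ` Fb r g (i div g)))
     \<and> (\<forall>T. T \<subseteq> {..<N} \<longrightarrow> card T \<le> k \<longrightarrow> grp_ok r g T \<longrightarrow> inj_on h T \<and> VS.independent (h ` T))"

lemma card_Fb[simp]: "card (Fb r g j) = r"
  by (simp add: Fb_def)

lemma Fb_div: "i \<in> Fb r g j \<Longrightarrow> r \<le> g \<Longrightarrow> i div g = j"
proof -
  assume i: "i \<in> Fb r g j" and rg: "r \<le> g"
  then obtain s where s: "i = j*g + s" "s < r" unfolding Fb_def
    by (metis atLeastLessThan_iff le_Suc_ex add_less_cancel_left)
  hence "s < g" using rg by simp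
  thus ?thesis using s by simp
qed

lemma Fb_less: "r \<le> i mod g \<Longrightarrow> x \<in> Fb r g (i div g) \<Longrightarrow> x < i"
proof -
  assume a: "r \<le> i mod g" "x \<in> Fb r g (i div g)"
  have "x < i div g * g + r" using a(2) unfolding Fb_def by simp
  also have "\<dots> \<le> i div g * g + i mod g" using a(1) by (simp only: add_le_cancel_left)
  also have "\<dots> = i" by (rule div_mult_mod_eq)
  finally show ?thesis .
qed

lemma Inv_0: "Inv k r g 0 h"
  by (simp add: Inv_def VS.independent_empty)

lemma grp_ok_subset: "grp_ok r g T \<Longrightarrow> T' \<subseteq> T \<Longrightarrow> finite T \<Longrightarrow> grp_ok r g T'"
  unfolding grp_ok_def
proof (intro allI)
  fix j assume a: "\<forall>j. card {i \<in> T. i div g = j} \<le> r" "T' \<subseteq> T" "finite T"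
  have "card {i \<in> T'. i div g = j} \<le> card {i \<in> T. i div g = j}"
    by (rule card_mono) (use a in auto)
  thus "card {i \<in> T'. i div g = j} \<le> r" using a(1) by (meson order_trans)
qed

lemma inv_step:
  fixes h :: "nat \<Rightarrow> nat \<Rightarrow> 'a::{field,finite}"
  assumes inv: "Inv k r g N h" and N: "N < n" and q: "k * n ^ k < CARD('a)" and rg: "r \<le> g"
  shows "\<exists>h' :: nat \<Rightarrow> nat \<Rightarrow> 'a. Inv k r g (Suc N) h'"
proof -
  define j where "j = N div g"
  define t where "t = N mod g"
  have Njt: "N = j * g + t" unfolding j_def t_def by simp
  have inv1: "\<And>i. i < N \<Longrightarrow> h i \<in> ambient k" using inv by (simp add: Inv_def)
  have inv2: "\<And>i. i < N \<Longrightarrow> r \<le> i mod g \<Longrightarrow> h i \<in> VS.span (h ` Fb r g (i div g))"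
    using inv by (simp add: Inv_def)
  have inv3: "\<And>T. T \<subseteq> {..<N} \<Longrightarrow> card T \<le> k \<Longrightarrow> grp_ok r g T \<Longrightarrow> inj_on h T \<and> VS.independent (h ` T)"
    using inv by (simp add: Inv_def)
  define D where "D = (if t < r then ambient k else VS.span (h ` Fb r g j))"
  have FbN: "Fb r g j \<subseteq> {..<N}" if "\<not> t < r"
    using that Fb_less[of r N g] unfolding j_def t_def by auto
  have DS: "VS.subspace D" unfolding D_def by (simp add: amb_subspace)
  have Damb: "D \<subseteq> ambient k"
  proof (cases "t < r")
    case False
    have "h ` Fb r g j \<subseteq> ambient k" using FbN[OF False] inv1 by blast
    hence "VS.span (h ` Fb r g j) \<subseteq> ambient k" by (rule VS.span_minimal) (rule amb_subspace)
    thus ?thesis using False by (simp add: D_def)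
  qed (simp add: D_def)
  have fD: "finite D" using finite_subset[OF Damb finite_amb] .
  define Bad where "Bad = {T. T \<subseteq> {..<N} \<and> card T < k \<and> card {i\<in>T. i div g = j} < r \<and> grp_ok r g T}"
  define \<U> where "\<U> = (\<lambda>T. VS.span (h ` T)) ` Bad"
  have fBad: "finite Bad" unfolding Bad_def by (rule finite_subset[of _ "Pow {..<N}"]) auto
  have "card Bad \<le> card {T. T \<subseteq> {..<N} \<and> card T < k}"
    by (rule card_mono) (auto simp: Bad_def)
  also have "\<dots> \<le> k * n ^ k" using count_subsets[OF N] .
  finally have cBad: "card Bad < CARD('a)" using q by simp
  have fU: "finite \<U>" unfolding \<U>_def using fBad by simp
  have cU: "card \<U> < CARD('a)" unfolding \<U>_def using card_image_le[OF fBad] cBad by (meson le_less_trans)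
  have Uprop: "VS.subspace U \<and> \<not> D \<subseteq> U" if U: "U \<in> \<U>" for U
  proof -
    obtain T where T: "T \<in> Bad" "U = VS.span (h ` T)" using U unfolding \<U>_def by blast
    have TN: "T \<subseteq> {..<N}" and cT: "card T < k" and cTj: "card {i\<in>T. i div g = j} < r"
      and gT: "grp_ok r g T" using T(1) by (auto simp: Bad_def)
    have fT: "finite T" using TN finite_subset by blast
    have "\<not> D \<subseteq> U"
    proof (cases "t < r")
      case True
      have "card (h ` T) < k" using card_image_le[OF fT] cT by (meson le_less_trans)
      from amb_not_sub[OF _ this] fT show ?thesis using True T(2) by (simp add: D_def)
    next
      case False
      show ?thesis
      proof
        assume sub: "D \<subseteq> U"
        have "Fb r g j \<inter> T \<subseteq> {i\<in>T. i div g = j}" using Fb_div[OF _ rg] by blast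
        hence "card (Fb r g j \<inter> T) \<le> card {i\<in>T. i div g = j}" by (intro card_mono) (use fT in auto)
        hence "card (Fb r g j \<inter> T) < card (Fb r g j)" using cTj by simp
        hence "\<not> Fb r g j \<subseteq> T" by (metis Int_absorb2 less_irrefl)
        then obtain f where f: "f \<in> Fb r g j" "f \<notin> T" by blast
        have fj: "f div g = j" using Fb_div[OF f(1) rg] .
        define T' where "T' = insert f T"
        have T'N: "T' \<subseteq> {..<N}" using FbN[OF False] f TN by (auto simp: T'_def)
        have cT': "card T' \<le> k" using cT fT f by (simp add: T'_def)
        have gT': "grp_ok r g T'" unfolding grp_ok_def
        proof
          fix j'
          show "card {i \<in> T'. i div g = j'} \<le> r"
          proof (cases "j' = j")
            case True
            have "{i \<in> T'. i div g = j'} = insert f {i\<in>T. i div g = j}" using True fj by (auto simp: T'_def)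
            thus ?thesis using cTj fT f(2) by simp
          next
            case False
            have "{i \<in> T'. i div g = j'} = {i\<in>T. i div g = j'}" using False fj by (auto simp: T'_def)
            thus ?thesis using gT by (simp add: grp_ok_def)
          qed
        qed
        from inv3[OF T'N cT' gT'] have ii: "inj_on h T'" "VS.independent (h ` T')" by auto
        have hf: "h f \<notin> h ` T" using ii(1) f(2) by (simp add: T'_def)
        have "VS.independent (insert (h f) (h ` T))" using ii(2) by (simp add: T'_def)
        hence "h f \<notin> VS.span (h ` T)" using hf VS.independent_insert[of "h f" "h ` T"] by simp
        moreover have "h f \<in> D" using False VS.span_base[OF imageI[OF f(1)], of h] by (simp add: D_def)
        ultimately show False using sub T(2) by blast
      qed
    qed
    thus ?thesis using T(2) by simp
  qed
  obtain x where x: "x \<in> D" "\<And>U. U \<in> \<U> \<Longrightarrow> x \<notin> U"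
    using avoid_subspaces[OF DS fD fU cU Uprop] by blast
  have xbad: "x \<notin> VS.span (h ` T)" if "T \<in> Bad" for T using x(2) that unfolding \<U>_def by blast
  define h' where "h' = h(N := x)"
  have agree: "\<And>i. i < N \<Longrightarrow> h' i = h i" by (simp add: h'_def)
  have I1: "\<forall>i<Suc N. h' i \<in> ambient k"
  proof (intro allI impI)
    fix i assume "i < Suc N"
    thus "h' i \<in> ambient k" using inv1 x(1) Damb by (cases "i = N") (auto simp: h'_def)
  qed
  have I2: "\<forall>i<Suc N. r \<le> i mod g \<longrightarrow> h' i \<in> VS.span (h' ` Fb r g (i div g))"
  proof (intro allI impI)
    fix i assume i: "i < Suc N" "r \<le> i mod g"
    have im: "h' ` Fb r g (i div g) = h ` Fb r g (i div g)"
    proof (rule image_cong[OF refl])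
      fix y assume "y \<in> Fb r g (i div g)"
      hence "y < i" by (rule Fb_less[OF i(2)])
      hence "y \<noteq> N" using i(1) by simp
      thus "h' y = h y" by (simp add: h'_def)
    qed
    show "h' i \<in> VS.span (h' ` Fb r g (i div g))"
    proof (cases "i = N")
      case True
      hence "\<not> t < r" using i(2) by (simp add: t_def)
      thus ?thesis using x(1) True im by (simp add: D_def h'_def j_def)
    next
      case False
      thus ?thesis using inv2[of i] i im by (simp add: h'_def)
    qed
  qed
  have I3: "\<forall>T. T \<subseteq> {..<Suc N} \<longrightarrow> card T \<le> k \<longrightarrow> grp_ok r g T \<longrightarrow> inj_on h' T \<and> VS.independent (h' ` T)"
  proof (intro allI impI)
    fix T assume T: "T \<subseteq> {..<Suc N}" "card T \<le> k" "grp_ok r g T"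
    have fT: "finite T" using T(1) finite_subset by blast
    show "inj_on h' T \<and> VS.independent (h' ` T)"
    proof (cases "N \<in> T")
      case False
      have TN: "T \<subseteq> {..<N}"
      proof
        fix y assume "y \<in> T"
        hence "y < Suc N" "y \<noteq> N" using T(1) False by auto
        thus "y \<in> {..<N}" by simp
      qed
      have e: "\<And>i. i \<in> T \<Longrightarrow> h' i = h i" using TN agree by auto
      have "inj_on h' T = inj_on h T" by (rule inj_on_cong) (use e in auto)
      moreover have "h' ` T = h ` T" by (rule image_cong[OF refl e])
      ultimately show ?thesis using inv3[OF TN T(2,3)] by simp
    next
      case True
      define T0 where "T0 = T - {N}"
      have T0N: "T0 \<subseteq> {..<N}" using T(1) by (auto simp: T0_def)
      have TT0: "T = insert N T0" using True by (auto simp: T0_def)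
      have NT0: "N \<notin> T0" by (simp add: T0_def)
      have fT0: "finite T0" using fT by (simp add: T0_def)
      have cT0: "card T0 < k" using T(2) TT0 NT0 fT0 by simp
      have "{i\<in>T. i div g = j} = insert N {i\<in>T0. i div g = j}" using TT0 by (auto simp: j_def)
      hence "card {i\<in>T. i div g = j} = Suc (card {i\<in>T0. i div g = j})" using NT0 fT0 by simp
      moreover have "card {i\<in>T. i div g = j} \<le> r" using T(3) by (simp add: grp_ok_def)
      ultimately have cT0j: "card {i\<in>T0. i div g = j} < r" by simp
      have gT0: "grp_ok r g T0" using grp_ok_subset[OF T(3) _ fT] by (simp add: T0_def)
      have T0bad: "T0 \<in> Bad" using T0N cT0 cT0j gT0 by (simp add: Bad_def)
      have xn: "x \<notin> VS.span (h ` T0)" using xbad[OF T0bad] .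
      have ih: "inj_on h T0" "VS.independent (h ` T0)" using inv3[OF T0N _ gT0] cT0 by auto
      have e: "\<And>i. i \<in> T0 \<Longrightarrow> h' i = h i" using T0N agree by auto
      have im: "h' ` T0 = h ` T0" by (rule image_cong[OF refl e])
      have inj0: "inj_on h' T0" using ih(1) inj_on_cong[of T0 h' h] e by simp
      have xnot: "x \<notin> h ` T0" using xn VS.span_base by blast
      have "inj_on h' T" unfolding TT0 using inj0 xnot im by (simp add: h'_def NT0)
      moreover have "h' ` T = insert x (h ` T0)"
      proof -
        have "h' ` T = insert (h' N) (h' ` T0)" unfolding TT0 by (rule image_insert)
        also have "\<dots> = insert (h' N) (h ` T0)" by (simp only: im)
        also have "h' N = x" by (simp add: h'_def)
        finally show ?thesis .
      qed
      moreover have "VS.independent (insert x (h ` T0))" by (rule VS.independent_insertI[OF xn ih(2)])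
      ultimately show ?thesis by simp
    qed
  qed
  have "Inv k r g (Suc N) h'" unfolding Inv_def by (intro conjI I1 I2 I3)
  thus ?thesis by blast
qed

lemma construct:
  assumes "k * n ^ k < CARD('a::{field,finite})" "r \<le> g"
  shows "N \<le> n \<Longrightarrow> \<exists>h :: nat \<Rightarrow> nat \<Rightarrow> 'a. Inv k r g N h"
proof (induction N)
  case 0 show ?case using Inv_0 by blast
next
  case (Suc N)
  have Nn: "N < n" using Suc.prems by simp
  hence "N \<le> n" by simp
  then obtain h :: "nat \<Rightarrow> nat \<Rightarrow> 'a" where hI: "Inv k r g N h" using Suc.IH by blast
  show ?case by (rule inv_step[OF hI Nn assms(1,2)])
qed



lemma comb_bound:
  fixes Z :: "nat set"
  assumes Zn: "Z \<subseteq> {..<n}" and rpos: "0 < r" and g: "g = r + \<delta> - 1" and dpos: "0 < \<delta>"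
    and noT: "\<And>T. T \<subseteq> Z \<Longrightarrow> grp_ok r g T \<Longrightarrow> card T < k"
  shows "card Z \<le> (k - 1) + ((k - 1) div r) * (\<delta> - 1)"
proof -
  have gpos: "0 < g" using g rpos dpos by simp
  define J where "J = {..<n}"
  define Zj where "Zj j = {i\<in>Z. i div g = j}" for j
  have fZ: "finite Z" using Zn finite_subset by blast
  have fZj: "finite (Zj j)" for j using fZ by (simp add: Zj_def)
  have "\<exists>B. B \<subseteq> Zj j \<and> card B = min r (card (Zj j))" for j
    using obtain_subset_with_card_n[of "min r (card (Zj j))" "Zj j"] by (metis min.cobounded2)
  then obtain Tj where Tj: "\<And>j. Tj j \<subseteq> Zj j" "\<And>j. card (Tj j) = min r (card (Zj j))" by metis
  have fTj: "finite (Tj j)" for j using Tj(1) fZj finite_subset by blast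
  define T where "T = (\<Union>j\<in>J. Tj j)"
  have TZ: "T \<subseteq> Z" using Tj(1) by (auto simp: T_def Zj_def)
  have gT: "grp_ok r g T" unfolding grp_ok_def
  proof
    fix j
    have "{i \<in> T. i div g = j} \<subseteq> Tj j"
    proof
      fix i assume i: "i \<in> {i \<in> T. i div g = j}"
      then obtain j0 where "j0 \<in> J" "i \<in> Tj j0" by (auto simp: T_def)
      moreover have "i div g = j0" using calculation Tj(1) by (auto simp: Zj_def)
      ultimately show "i \<in> Tj j" using i by simp
    qed
    hence "card {i \<in> T. i div g = j} \<le> card (Tj j)" by (intro card_mono fTj)
    thus "card {i \<in> T. i div g = j} \<le> r" using Tj(2)[of j] by simp
  qed
  have disj: "\<forall>j1\<in>J. \<forall>j2\<in>J. j1 \<noteq> j2 \<longrightarrow> Tj j1 \<inter> Tj j2 = {}"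
  proof (intro ballI impI)
    fix j1 j2 :: nat assume "j1 \<noteq> j2"
    thus "Tj j1 \<inter> Tj j2 = {}" using Tj(1)[of j1] Tj(1)[of j2] by (auto simp: Zj_def)
  qed
  have cardT: "card T = (\<Sum>j\<in>J. min r (card (Zj j)))"
    unfolding T_def by (subst card_UN_disjoint) (auto simp: J_def fTj Tj(2) disj)
  have sumMin: "(\<Sum>j\<in>J. min r (card (Zj j))) \<le> k - 1"
    using noT[OF TZ gT] cardT by simp
  have cardZ: "card Z = (\<Sum>j\<in>J. card (Zj j))"
  proof -
    have "(\<Sum>j\<in>J. card (Zj j)) = (\<Sum>j\<in>J. \<Sum>i\<in>{i\<in>Z. i div g = j}. 1)" by (simp add: Zj_def)
    also have "\<dots> = (\<Sum>i\<in>Z. 1)"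
    proof (rule sum.group)
      show "finite Z" by (rule fZ)
      show "finite J" by (simp add: J_def)
      show "(\<lambda>i. i div g) ` Z \<subseteq> J"
      proof
        fix x assume "x \<in> (\<lambda>i. i div g) ` Z"
        then obtain i where "i \<in> Z" "x = i div g" by blast
        have "i div g \<le> i" by simp
        moreover have "i < n" using \<open>i \<in> Z\<close> Zn by auto
        ultimately have "i div g < n" by linarith
        thus "x \<in> J" using \<open>x = i div g\<close> by (simp add: J_def)
      qed
    qed
    finally show ?thesis by simp
  qed
  have Zjg: "card (Zj j) \<le> g" for j
  proof -
    have "Zj j \<subseteq> {j*g ..< j*g + g}"
    proof
      fix i assume "i \<in> Zj j"
      hence "i div g = j" by (simp add: Zj_def)
      moreover have "i div g * g \<le> i" by (rule div_times_less_eq_dividend)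
      moreover have "i < i div g * g + g" using gpos
        by (metis add.commute div_mult_mod_eq mod_less_divisor nat_add_left_cancel_less)
      ultimately show "i \<in> {j*g ..< j*g + g}" by simp
    qed
    thus ?thesis by (metis card_atLeastLessThan card_mono finite_atLeastLessThan add_diff_cancel_left')
  qed
  define A where "A = {j\<in>J. r \<le> card (Zj j)}"
  have fJ: "finite J" by (simp add: J_def)
  have each: "card (Zj j) \<le> min r (card (Zj j)) + (if j \<in> A then \<delta> - 1 else 0)" if "j \<in> J" for j
    using Zjg[of j] that g dpos by (auto simp: A_def)
  have "card Z \<le> (\<Sum>j\<in>J. min r (card (Zj j)) + (if j \<in> A then \<delta> - 1 else 0))"
    unfolding cardZ by (rule sum_mono) (rule each)
  also have "\<dots> = (\<Sum>j\<in>J. min r (card (Zj j))) + card A * (\<delta> - 1)"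
    by (simp add: sum.distrib sum.If_cases fJ A_def Int_def)
  finally have c1: "card Z \<le> (k - 1) + card A * (\<delta> - 1)" using sumMin by linarith
  have "card A * r = (\<Sum>j\<in>A. r)" by simp
  also have "\<dots> = (\<Sum>j\<in>A. min r (card (Zj j)))" by (rule sum.cong) (auto simp: A_def)
  also have "\<dots> \<le> (\<Sum>j\<in>J. min r (card (Zj j)))" by (rule sum_mono2) (auto simp: fJ A_def)
  finally have "card A * r \<le> k - 1" using sumMin by linarith
  hence "card A * r div r \<le> (k - 1) div r" by (rule div_le_mono)
  hence "card A \<le> (k - 1) div r" using rpos by simp
  hence "card A * (\<delta> - 1) \<le> ((k - 1) div r) * (\<delta> - 1)" by (rule mult_right_mono) simp
  thus ?thesis using c1 by linarith
qed

definition cw :: "nat \<Rightarrow> nat \<Rightarrow> (nat \<Rightarrow> nat \<Rightarrow> 'a::field) \<Rightarrow> (nat \<Rightarrow> 'a) \<Rightarrow> (nat \<Rightarrow> 'a)" where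
  "cw n k h u = (\<lambda>i. if i < n then dotp k u (h i) else 0)"

lemma card_field_ge2: "2 \<le> CARD('a::{field,finite})"
proof -
  have "card {0::'a, 1} \<le> CARD('a)" by (rule card_mono) auto
  thus ?thesis by simp
qed

lemma cw_amb: "cw n k h u \<in> ambient n"
  by (simp add: cw_def ambient_def)

lemma cw_add: "cw n k h (u + v) = cw n k h u + cw n k h v"
  by (rule ext) (simp add: cw_def dotp_add1)

lemma cw_scale: "cw n k h (vscale c u) = vscale c (cw n k h u)"
  by (rule ext) (simp only: cw_def dotp_scale1, simp add: vscale_def)

lemma cw_zero: "cw n k h 0 = 0"
  by (rule ext) (simp add: cw_def)

lemma cw_diff: "cw n k h (u - v) = cw n k h u - cw n k h v"
  by (rule ext) (simp add: cw_def dotp_diff1)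

lemma cw_sum: "cw n k h (sum f A) = (\<Sum>x\<in>A. cw n k h (f x))"
proof (induction A rule: infinite_finite_induct)
  case (infinite A) show ?case by (simp only: sum.infinite[OF infinite] cw_zero)
next
  case empty thus ?case by (simp only: sum.empty cw_zero)
next
  case (insert x F) thus ?case by (simp only: sum.insert[OF insert.hyps] cw_add insert.IH)
qed

context
  fixes n k r \<delta> g :: nat and h :: "nat \<Rightarrow> nat \<Rightarrow> 'a::{field,finite}"
  assumes I: "Inv k r g n h" and g: "g = r + \<delta> - 1" and rpos: "0 < r" and kpos: "0 < k" and dpos: "0 < \<delta>"
begin

lemma I1: "i < n \<Longrightarrow> h i \<in> ambient k" using I by (simp add: Inv_def)
lemma I2: "i < n \<Longrightarrow> r \<le> i mod g \<Longrightarrow> h i \<in> VS.span (h ` Fb r g (i div g))" using I by (simp add: Inv_def)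
lemma I3: "T \<subseteq> {..<n} \<Longrightarrow> card T \<le> k \<Longrightarrow> grp_ok r g T \<Longrightarrow> inj_on h T \<and> VS.independent (h ` T)"
  using I by (simp add: Inv_def)

lemma full_span_zero:
  assumes u: "u \<in> ambient k" and T: "T \<subseteq> {..<n}" "card T = k" "grp_ok r g T"
    and z: "\<forall>i\<in>T. dotp k u (h i) = 0"
  shows "u = 0"
proof -
  have ii: "inj_on h T" "VS.independent (h ` T)" using I3[OF T(1) _ T(3)] T(2) by auto
  have fT: "finite T" using T(1) finite_subset by blast
  have ck: "card (h ` T) = k" using card_image[OF ii(1)] T(2) by simp
  have sub: "h ` T \<subseteq> VS.span (unitv ` {..<k})" using I1 T(1) amb_span by blast
  have "VS.span (unitv ` {..<k}) \<subseteq> VS.span (h ` T)"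
    by (rule span_full[OF _ ii(2) sub]) (simp_all add: card_unitv ck)
  hence "ambient k \<subseteq> VS.span (h ` T)" using amb_span by metis
  moreover have "\<forall>x\<in>h ` T. dotp k u x = 0" using z by blast
  ultimately have "\<forall>x\<in>ambient k. dotp k u x = 0" using dotp_span by blast
  thus ?thesis using dotp_zero_amb[OF u] by blast
qed

lemma zeros_bound:
  assumes u: "u \<in> ambient k" "u \<noteq> 0"
  shows "card {i. i < n \<and> dotp k u (h i) = 0} \<le> (k - 1) + ((k - 1) div r) * (\<delta> - 1)"
proof (rule comb_bound[OF _ rpos g dpos])
  show "{i. i < n \<and> dotp k u (h i) = 0} \<subseteq> {..<n}" by auto
  fix T assume T: "T \<subseteq> {i. i < n \<and> dotp k u (h i) = 0}" "grp_ok r g T"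
  show "card T < k"
  proof (rule ccontr)
    assume "\<not> card T < k"
    hence kT: "k \<le> card T" by simp
    have fT: "finite T" using T(1) by (rule finite_subset) simp
    obtain T' where T': "T' \<subseteq> T" "card T' = k" using obtain_subset_with_card_n[OF kT] by metis
    have gT': "grp_ok r g T'" using grp_ok_subset[OF T(2) T'(1) fT] .
    have "u = 0" by (rule full_span_zero[OF u(1) _ T'(2) gT']) (use T T' in auto)
    thus False using u(2) by simp
  qed
qed

lemma upper:
  assumes M: "(k - 1) + ((k - 1) div r) * (\<delta> - 1) \<le> n"
  shows "\<exists>w\<in>ambient k. w \<noteq> 0 \<and> (\<forall>i < (k - 1) + ((k - 1) div r) * (\<delta> - 1). dotp k w (h i) = 0)"
proof -
  define c where "c = (k - 1) div r"
  define rem where "rem = (k - 1) - c * r"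
  have cr: "c * r \<le> k - 1" unfolding c_def by (rule div_times_less_eq_dividend)
  define P where "P = (\<lambda>p. fst p * g + snd p) ` ({..<c} \<times> {..<r}) \<union> {c*g ..< c*g + rem}"
  have fP: "finite P" by (simp add: P_def)
  have "card P \<le> card ((\<lambda>p. fst p * g + snd p) ` ({..<c} \<times> {..<r})) + card {c*g ..< c*g + rem}"
    unfolding P_def by (rule card_Un_le)
  also have "\<dots> \<le> c * r + rem"
    using card_image_le[of "{..<c} \<times> {..<r}" "\<lambda>p. fst p * g + snd p"] by (simp add: card_cartesian_product)
  finally have cP: "card P \<le> k - 1" using cr by (simp add: rem_def)
  define \<phi> where "\<phi> u = restrict (\<lambda>i. dotp k u (h i)) P" for u
  have img: "\<phi> ` ambient k \<subseteq> PiE P (\<lambda>_. UNIV :: 'a set)" by (auto simp: \<phi>_def)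
  have "card (PiE P (\<lambda>_. UNIV :: 'a set)) = CARD('a) ^ card P" using fP by (simp add: card_PiE)
  also have "\<dots> \<le> CARD('a) ^ (k - 1)" using cP card_field_ge2[where 'a='a] by (intro power_increasing) auto
  also have "\<dots> < CARD('a) ^ k" using kpos card_field_ge2[where 'a='a] by (intro power_strict_increasing) auto
  also have "\<dots> = card (ambient k :: (nat \<Rightarrow> 'a) set)" by (simp add: card_amb)
  finally have lt: "card (PiE P (\<lambda>_. UNIV :: 'a set)) < card (ambient k :: (nat \<Rightarrow> 'a) set)" .
  have "\<not> inj_on \<phi> (ambient k)"
  proof
    assume "inj_on \<phi> (ambient k)"
    hence "card (ambient k :: (nat \<Rightarrow> 'a) set) \<le> card (PiE P (\<lambda>_. UNIV :: 'a set))"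
      using card_inj_on_le[OF _ img] fP by (simp add: finite_PiE)
    thus False using lt by simp
  qed
  then obtain u1 u2 where u: "u1 \<in> ambient k" "u2 \<in> ambient k" "u1 \<noteq> u2" "\<phi> u1 = \<phi> u2"
    unfolding inj_on_def by blast
  define w where "w = u1 - u2"
  have wa: "w \<in> ambient k" unfolding w_def by (rule VS.subspace_diff[OF amb_subspace u(1,2)])
  have wn: "w \<noteq> 0" using u(3) by (simp add: w_def)
  have wP: "dotp k w (h i) = 0" if "i \<in> P" for i
  proof -
    have "\<phi> u1 i = \<phi> u2 i" using u(4) by simp
    hence "dotp k u1 (h i) = dotp k u2 (h i)" using that by (simp add: \<phi>_def)
    thus ?thesis by (simp add: w_def dotp_diff1)
  qed
  have cg: "c * g = c * r + c * (\<delta> - 1)" using g dpos by (simp add: algebra_simps)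
  have Meq: "c * g + rem = (k - 1) + c * (\<delta> - 1)" using cg cr by (simp add: rem_def)
  have "dotp k w (h i) = 0" if i: "i < (k - 1) + c * (\<delta> - 1)" for i
  proof (cases "i \<in> P")
    case True thus ?thesis by (rule wP)
  next
    case False
    have icg: "i < c * g"
    proof (rule ccontr)
      assume "\<not> i < c * g"
      hence "i \<in> {c*g ..< c*g + rem}" using i Meq by simp
      thus False using False by (simp add: P_def)
    qed
    have gpos: "0 < g" using g rpos dpos by simp
    define j where "j = i div g"
    define t where "t = i mod g"
    have jc: "j < c" using icg unfolding j_def by (simp add: less_mult_imp_div_less)
    have ijt: "i = j * g + t" by (simp add: j_def t_def)
    have tr: "r \<le> t"
    proof (rule ccontr)
      assume "\<not> r \<le> t"
      hence "(j, t) \<in> {..<c} \<times> {..<r}" using jc by simp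
      hence "i \<in> P" unfolding P_def using ijt by (auto intro!: image_eqI[of _ _ "(j, t)"])
      thus False using False by simp
    qed
    have "i < n" using i M unfolding c_def by linarith
    hence hi: "h i \<in> VS.span (h ` Fb r g j)" using I2 tr unfolding j_def t_def by blast
    have "Fb r g j \<subseteq> P"
    proof
      fix x assume "x \<in> Fb r g j"
      then obtain s where s: "x = j * g + s" "s < r" unfolding Fb_def
        by (metis atLeastLessThan_iff le_Suc_ex add_less_cancel_left)
      hence "(j, s) \<in> {..<c} \<times> {..<r}" using jc by simp
      thus "x \<in> P" unfolding P_def using s by (auto intro!: image_eqI[of _ _ "(j, s)"])
    qed
    hence "\<forall>x\<in>h ` Fb r g j. dotp k w x = 0" using wP by blast
    thus ?thesis using dotp_span hi by blast
  qed
  thus ?thesis using wa wn unfolding c_def by blast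
qed

lemma span_group:
  assumes l: "l < n" "l div g = j"
  shows "h l \<in> VS.span (h ` Fb r g j)"
proof (cases "r \<le> l mod g")
  case True thus ?thesis using I2[OF l(1) True] l(2) by simp
next
  case False
  have "l = j * g + l mod g" using l(2) by (metis div_mult_mod_eq)
  hence "l \<in> Fb r g j" using False unfolding Fb_def by (metis atLeastLessThan_iff le_add1 nat_add_left_cancel_less not_le)
  thus ?thesis by (intro VS.span_base imageI)
qed

lemma locality:
  assumes dvd: "g dvd n" and i0: "i0 < n"
  shows "has_locality n (cw n k h ` ambient k) r \<delta> i0"
proof -
  have gpos: "0 < g" using g rpos dpos by simp
  define j where "j = i0 div g"
  define S where "S = {j*g ..< j*g + g}"
  obtain m where m: "n = g * m" using dvd by blast
  have j1: "j * g \<le> i0" unfolding j_def by (rule div_times_less_eq_dividend)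
  have j2: "i0 < j * g + g" unfolding j_def using gpos
    by (metis add.commute div_mult_mod_eq mod_less_divisor nat_add_left_cancel_less)
  have "n = m * g" using m by simp
  hence "j * g < m * g" using j1 i0 by linarith
  hence "j < m" by (metis mult_less_cancel2)
  hence "Suc j * g \<le> m * g" by (intro mult_le_mono1) simp
  hence Sn: "S \<subseteq> {..<n}" using m by (auto simp: S_def mult.commute)
  have iS: "i0 \<in> S" using j1 j2 by (simp add: S_def)
  have cS: "card S = r + \<delta> - 1" using g by (simp add: S_def)
  have Sdiv: "l div g = j" if "l \<in> S" for l
  proof -
    from that obtain s where "l = j * g + s" "s < g" unfolding S_def
      by (metis atLeastLessThan_iff le_Suc_ex add_less_cancel_left)
    thus ?thesis using gpos by simp
  qed
  have "min_dist_ge n (puncture S (cw n k h ` ambient k)) \<delta>"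
    unfolding min_dist_ge_def
  proof (intro ballI impI)
    fix x assume x: "x \<in> puncture S (cw n k h ` ambient k)" "x \<noteq> 0"
    then obtain u where u: "u \<in> ambient k" "x = (\<lambda>l. if l \<in> S then cw n k h u l else 0)"
      unfolding puncture_def by blast
    define NZ where "NZ = {l\<in>S. dotp k u (h l) \<noteq> 0}"
    define ZS where "ZS = {l\<in>S. dotp k u (h l) = 0}"
    have hw: "hweight n x = card NZ"
    proof -
      have "{i. i < n \<and> x i \<noteq> 0} = NZ" using Sn by (auto simp: u(2) NZ_def cw_def)
      thus ?thesis by (simp add: hweight_def)
    qed
    have fS: "finite S" by (simp add: S_def)
    have "card NZ + card ZS = card S"
    proof -
      have "S = NZ \<union> ZS" "NZ \<inter> ZS = {}" by (auto simp: NZ_def ZS_def)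
      moreover have "finite NZ" "finite ZS" using fS by (auto simp: NZ_def ZS_def)
      ultimately show ?thesis by (metis card_Un_disjoint)
    qed
    show "\<delta> \<le> hweight n x"
    proof (rule ccontr)
      assume "\<not> \<delta> \<le> hweight n x"
      hence "card NZ < \<delta>" using hw by simp
      hence rZ: "min r k \<le> card ZS" using \<open>card NZ + card ZS = card S\<close> cS by linarith
      obtain R where R: "R \<subseteq> ZS" "card R = min r k" using obtain_subset_with_card_n[OF rZ] by metis
      have RS: "R \<subseteq> S" using R(1) by (auto simp: ZS_def)
      have Rn: "R \<subseteq> {..<n}" using RS Sn by blast
      have fR: "finite R" using RS fS finite_subset by blast
      have gR: "grp_ok r g R" unfolding grp_ok_def
      proof
        fix j'
        have "card {i \<in> R. i div g = j'} \<le> card R" by (rule card_mono[OF fR]) auto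
        thus "card {i \<in> R. i div g = j'} \<le> r" using R(2) by simp
      qed
      have ii: "inj_on h R" "VS.independent (h ` R)" using I3[OF Rn _ gR] R(2) by auto
      have chR: "card (h ` R) = min r k" using card_image[OF ii(1)] R(2) by simp
      have zR: "\<forall>y\<in>h ` R. dotp k u y = 0" using R(1) by (auto simp: ZS_def)
      have allz: "dotp k u (h l) = 0" if l: "l \<in> S" for l
      proof (cases "k \<le> r")
        case True
        have "u = 0"
          by (rule full_span_zero[OF u(1) Rn _ gR]) (use R(2) True zR in auto)
        thus ?thesis by simp
      next
        case False
        have sub: "h ` R \<subseteq> VS.span (h ` Fb r g j)"
          using span_group RS Sn Sdiv by blast
        have "card (h ` Fb r g j) \<le> card (h ` R)"
          using card_image_le[of "Fb r g j" h] chR False by (simp add: Fb_def)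
        hence "VS.span (h ` Fb r g j) \<subseteq> VS.span (h ` R)"
          by (intro span_full[OF _ ii(2) sub]) (simp add: Fb_def)
        moreover have "h l \<in> VS.span (h ` Fb r g j)" using span_group[of l j] l Sn Sdiv by blast
        ultimately show ?thesis using dotp_span zR by blast
      qed
      have "x = 0"
      proof (rule ext)
        fix l show "x l = 0 l" using allz by (simp add: u(2) cw_def)
      qed
      thus False using x(2) by simp
    qed
  qed
  thus ?thesis unfolding has_locality_def using Sn iS cS by (intro exI[of _ S]) simp
qed

lemma cw_inj0:
  assumes u: "u \<in> ambient k" and D: "(k - 1) + ((k - 1) div r) * (\<delta> - 1) < n" and z: "cw n k h u = 0"
  shows "u = 0"
proof (rule ccontr)
  assume "u \<noteq> 0"
  from zeros_bound[OF u this] have b: "card {i. i < n \<and> dotp k u (h i) = 0} \<le> (k - 1) + ((k - 1) div r) * (\<delta> - 1)" .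
  have "{i. i < n \<and> dotp k u (h i) = 0} = {..<n}"
  proof safe
    fix i assume "i < n"
    thus "dotp k u (h i) = 0" using fun_cong[OF z, of i] by (simp add: cw_def)
  qed
  thus False using b D by simp
qed

lemma weight_eq:
  "hweight n (cw n k h u) = n - card {i. i < n \<and> dotp k u (h i) = 0}"
proof -
  have "{i. i < n \<and> cw n k h u i \<noteq> 0} = {..<n} - {i. i < n \<and> dotp k u (h i) = 0}"
    by (auto simp: cw_def)
  moreover have "card ({..<n} - {i. i < n \<and> dotp k u (h i) = 0}) = n - card {i. i < n \<and> dotp k u (h i) = 0}"
    by (subst card_Diff_subset) auto
  ultimately show ?thesis by (simp add: hweight_def)
qed

lemma code_subspace: "VS.subspace (cw n k h ` ambient k)"
  unfolding VS.subspace_def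
proof (intro conjI ballI allI)
  show "0 \<in> cw n k h ` ambient k" using cw_zero VS.subspace_0[OF amb_subspace] by (metis image_eqI)
next
  fix x y assume "x \<in> cw n k h ` ambient k" "y \<in> cw n k h ` ambient k"
  then obtain u v where "u \<in> ambient k" "v \<in> ambient k" "x = cw n k h u" "y = cw n k h v" by blast
  thus "x + y \<in> cw n k h ` ambient k" using cw_add VS.subspace_add[OF amb_subspace] by (metis image_eqI)
next
  fix c x assume "x \<in> cw n k h ` ambient k"
  then obtain u where "u \<in> ambient k" "x = cw n k h u" by blast
  thus "vscale c x \<in> cw n k h ` ambient k" using cw_scale VS.subspace_scale[OF amb_subspace] by (metis image_eqI)
qed

lemma code_dim:
  assumes D: "(k - 1) + ((k - 1) div r) * (\<delta> - 1) < n"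
  shows "VS.dim (cw n k h ` ambient k) = k"
proof -
  define e where "e i = cw n k h (unitv i)" for i
  define B where "B = e ` {..<k}"
  have inje: "inj_on e {..<k}"
  proof (rule inj_onI)
    fix i i' assume ii: "i \<in> {..<k}" "i' \<in> {..<k}" "e i = e i'"
    have "cw n k h (unitv i - unitv i') = 0" using ii(3) by (simp add: e_def cw_diff)
    moreover have "unitv i - unitv i' \<in> ambient k"
      using ii(1,2) by (intro VS.subspace_diff[OF amb_subspace] unitv_amb) auto
    ultimately have "unitv i - unitv i' = (0 :: nat \<Rightarrow> 'a)" using cw_inj0 D by blast
    hence "(unitv i :: nat \<Rightarrow> 'a) = unitv i'" by simp
    thus "i = i'" using unitv_inj[where 'a='a] by (simp add: inj_def)
  qed
  have BC: "B \<subseteq> cw n k h ` ambient k" using unitv_amb by (auto simp: B_def e_def)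
  have CB: "cw n k h ` ambient k \<subseteq> VS.span B"
  proof
    fix x assume "x \<in> cw n k h ` ambient k"
    then obtain u where u: "u \<in> ambient k" "x = cw n k h u" by blast
    have "x = (\<Sum>i<k. vscale (u i) (e i))"
      unfolding u(2) e_def by (subst amb_decomp[OF u(1)]) (simp add: cw_sum cw_scale)
    also have "\<dots> \<in> VS.span B"
      by (rule VS.span_sum, rule VS.span_scale, rule VS.span_base) (auto simp: B_def)
    finally show "x \<in> VS.span B" .
  qed
  have indB: "VS.independent B"
  proof (rule VS.independent_if_scalars_zero)
    show "finite B" by (simp add: B_def)
    fix f :: "(nat \<Rightarrow> 'a) \<Rightarrow> 'a" and x assume s: "(\<Sum>x\<in>B. vscale (f x) x) = 0" and x: "x \<in> B"
    then obtain i where i: "i < k" "x = e i" by (auto simp: B_def)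
    define w where "w = (\<Sum>j<k. vscale (f (e j)) (unitv j :: nat \<Rightarrow> 'a))"
    have "(\<Sum>x\<in>B. vscale (f x) x) = (\<Sum>j<k. vscale (f (e j)) (e j))"
      unfolding B_def by (rule sum.reindex[OF inje, unfolded comp_def])
    also have "\<dots> = cw n k h w" unfolding w_def e_def by (simp add: cw_sum cw_scale)
    finally have "cw n k h w = 0" using s by simp
    moreover have "w \<in> ambient k" unfolding w_def
      by (rule VS.subspace_sum[OF amb_subspace], rule VS.subspace_scale[OF amb_subspace], rule unitv_amb) simp
    ultimately have "w = 0" using cw_inj0 D by blast
    hence "w i = 0" by simp
    moreover have "w i = f (e i)"
      using i(1) by (simp add: w_def sum_fun_apply vscale_def unitv_def sum_delta_mult')
    ultimately show "f x = 0" using i by simp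
  qed
  have "card B = k" using card_image[OF inje] by (simp add: B_def)
  thus ?thesis using VS.dim_unique[OF BC CB indB] by simp
qed

lemma code_min_dist:
  assumes D: "(k - 1) + ((k - 1) div r) * (\<delta> - 1) < n"
  shows "min_dist n (cw n k h ` ambient k) = n - ((k - 1) + ((k - 1) div r) * (\<delta> - 1))"
proof -
  define M where "M = (k - 1) + ((k - 1) div r) * (\<delta> - 1)"
  define C where "C = cw n k h ` ambient k"
  have fin: "finite (hweight n ` (C - {0}))" unfolding C_def by (intro finite_imageI finite_Diff finite_amb)
  have ge: "n - M \<le> y" if yin: "y \<in> hweight n ` (C - {0})" for y
  proof -
    obtain x where x: "x \<in> C" "x \<noteq> 0" "y = hweight n x" using yin by blast
    then obtain u where u0: "u \<in> ambient k" "x = cw n k h u" unfolding C_def by blast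
    have u: "u \<in> ambient k" "cw n k h u \<noteq> 0" "y = hweight n (cw n k h u)" using x u0 by auto
    have "u \<noteq> 0" using u(2) cw_zero by metis
    from zeros_bound[OF u(1) this] show ?thesis using u(3) weight_eq unfolding M_def by simp
  qed
  have "\<exists>w\<in>ambient k. w \<noteq> 0 \<and> (\<forall>i < M. dotp k w (h i) = 0)"
    unfolding M_def by (rule upper) (use D in simp)
  then obtain w where w: "w \<in> ambient k" "w \<noteq> 0" "\<forall>i < M. dotp k w (h i) = 0" by blast
  have cw0: "cw n k h w \<noteq> 0" using cw_inj0[OF w(1) D] w(2) by blast
  have "{..<M} \<subseteq> {i. i < n \<and> dotp k w (h i) = 0}" using w(3) D unfolding M_def by auto
  hence "card {..<M} \<le> card {i. i < n \<and> dotp k w (h i) = 0}" by (rule card_mono[rotated]) simp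
  hence "M \<le> card {i. i < n \<and> dotp k w (h i) = 0}" by simp
  hence wle: "hweight n (cw n k h w) \<le> n - M" using weight_eq by simp
  have mem: "hweight n (cw n k h w) \<in> hweight n ` (C - {0})" using w(1) cw0 unfolding C_def by blast
  have "Min (hweight n ` (C - {0})) = n - M"
  proof (rule antisym)
    show "Min (hweight n ` (C - {0})) \<le> n - M" using Min_le[OF fin mem] wle by linarith
    show "n - M \<le> Min (hweight n ` (C - {0}))" by (rule Min.boundedI[OF fin]) (use mem ge in auto)
  qed
  thus ?thesis by (simp add: min_dist_def C_def M_def)
qed

end

lemma ceil_eq:
  assumes k: "0 < k" and r: "0 < r"
  shows "\<lceil>real k / real r\<rceil> = int ((k - 1) div r) + 1"
proof (rule ceiling_unique)
  define c where "c = (k - 1) div r"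
  have cr: "c * r \<le> k - 1" unfolding c_def by (rule div_times_less_eq_dividend)
  have km: "k - 1 = c * r + (k - 1) mod r" unfolding c_def by simp
  have "(k - 1) mod r < r" using r by simp
  hence k2: "k \<le> (c + 1) * r" using km k by (simp add: algebra_simps)
  have "real c * real r < real k" using cr k by (metis of_nat_less_iff of_nat_mult less_le_trans diff_less zero_less_one le_less_trans)
  hence "real c < real k / real r" using r by (simp add: pos_less_divide_eq)
  thus "real_of_int (int ((k - 1) div r) + 1) - 1 < real k / real r" by (simp add: c_def)
  have "real k \<le> (real c + 1) * real r" using k2 by (metis of_nat_1 of_nat_add of_nat_le_iff of_nat_mult)
  hence "real k / real r \<le> real c + 1" using r by (simp add: pos_divide_le_eq)
  thus "real k / real r \<le> real_of_int (int ((k - 1) div r) + 1)" by (simp add: c_def)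
qed

theorem theorem5:
  fixes n k r \<delta> :: nat
  assumes "0 < n" "0 < k" "0 < r" "0 < \<delta>"
    and "(r + \<delta> - 1) dvd n"
    and "int \<delta> \<le> int n - int k + 1 - (\<lceil>real k / real r\<rceil> - 1) * (int \<delta> - 1)"
    and "CARD('a::{field,finite}) > k * n ^ k"
  shows "\<exists>C :: (nat \<Rightarrow> 'a) set. linear_code n k C \<and> all_symbol_locality n C r \<delta> \<and>
           int (min_dist n C) = int n - int k + 1 - (\<lceil>real k / real r\<rceil> - 1) * (int \<delta> - 1)"
proof -
  define g where "g = r + \<delta> - 1"
  define c where "c = (k - 1) div r"
  define M where "M = (k - 1) + c * (\<delta> - 1)"
  have ce: "\<lceil>real k / real r\<rceil> - 1 = int c" using ceil_eq[OF assms(2,3)] by (simp add: c_def)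
  have iM: "int M = int k - 1 + int c * (int \<delta> - 1)" using assms(2,4) by (simp add: M_def of_nat_diff)
  have Mn: "M < n" using assms(6) iM ce assms(4) by simp
  have rg: "r \<le> g" using assms(4) by (simp add: g_def)
  obtain h :: "nat \<Rightarrow> nat \<Rightarrow> 'a" where I: "Inv k r g n h" using construct[OF assms(7) rg, of n] by blast
  have gd: "g = r + \<delta> - 1" by (simp add: g_def)
  have D: "(k - 1) + ((k - 1) div r) * (\<delta> - 1) < n" using Mn by (simp add: M_def c_def)
  define C where "C = cw n k h ` ambient k"
  have lc: "linear_code n k C" unfolding linear_code_def C_def
    using cw_amb code_subspace[OF I gd assms(3,2,4)] code_dim[OF I gd assms(3,2,4) D] by blast
  have loc: "all_symbol_locality n C r \<delta>" unfolding all_symbol_locality_def C_def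
    using locality[OF I gd assms(3,2,4)] assms(5) by (simp add: g_def)
  have md: "min_dist n C = n - M"
    using code_min_dist[OF I gd assms(3,2,4) D] by (simp add: C_def M_def c_def)
  have "int (min_dist n C) = int n - int k + 1 - (\<lceil>real k / real r\<rceil> - 1) * (int \<delta> - 1)"
    using md Mn iM ce by (simp add: of_nat_diff)
  thus ?thesis using lc loc by blast
qed

end
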